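(* Let $M=(\mathcal{X},\mathcal{A},T,r,H,\rho)$, $\pi_e$, $\pi_b$, $K\ge1$, and $(\widetilde M,\widetilde\pi_e,\widetilde\pi_b)$ be as in the Replicator construction below. Then: (a) $\max_{l}\max_{\tilde x\in\widetilde{\mathcal{X}}_l,a}\frac{d_l^{\widetilde\pi_e}(\tilde x,a;\widetilde M)}{d_l^{\widetilde\pi_b}(\tilde x,a;\widetilde M)}\le 2\max_h\max_{x\in\mathcal{X}_h,a}\frac{d_h^{\pi_e}(x,a;M)}{d_h^{\pi_b}(x,a;M)}$; (b) the state-action value function of $\widetilde\pi_e$ in $\widetilde M$ is given, for $h\le H-1$, $x\in\mathcal{X}_h$, $k\in[K]$, $a\in\mathcal{A}$, by $Q^{\widetilde\pi_e}((x,k),a;\widetilde M)=Q^{\pi_e}_h(x,a;M)$ if $k=K$; $=Q^{\pi_e}_h(x,\pi_e(x);M)$ if $k<K$ and $a=\pi_e(x)$; $=\sum_{x'\in\mathcal{X}_h}d_h^{\pi_b}(x';M)Q_h^{\pi_e}(x',\pi_e(x');M)$ if $k<K$ and $a\ne\pi_e(x)$; and $Q^{\widetilde\pi_e}((x,1),a;\widetilde M)=Q_H^{\pi_e}(x,a;M)$ for $x\in\mathcal{X}_H$. In particular $V^{\widetilde\pi_e}(\widetilde\rho;\widetilde M)=V^{\pi_e}(\rho;M)$.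
   Context: $M$ is a layered finite-horizon MDP with state space $\mathcal{X}_1\cup\dots\cup\mathcal{X}_H$, action set $\mathcal{A}$ with $|\mathcal{A}|\ge2$, transition $T$, mean reward $r$, initial distribution $\rho\in\Delta(\mathcal{X}_1)$; $\pi_e$ is a deterministic evaluation policy and $\pi_b$ an offline policy; $d_h^\pi(x;M)=\Pr(x_h=x)$ and $d_h^\pi(x,a;M)=d_h^\pi(x;M)\pi(a|x)$; ratios with $0/0$ are ignored. Replicator construction with integer $K\ge1$: fix a deterministic $\pi_{\mathrm{other}}$ with $\pi_{\mathrm{other}}(x)\ne\pi_e(x)$ for all $x$. $\widetilde M$ has horizon $\widetilde H=(H-1)K+1$; its layer $l=(h-1)K+k$ ($h\in[H-1]$, $k\in[K]$) is $\{(x,k):x\in\mathcal{X}_h\}$, and its last layer $\widetilde H$ is $\{(x,1):x\in\mathcal{X}_H\}$; initial distribution $\widetilde\rho((x,1))=\rho(x)$. Transitions: for $h\le H-1$, $k\le K-1$, $x,x'\in\mathcal{X}_h$: $\widetilde T((x',k+1)|(x,k),a)=\mathbb{I}\{x'=x\}$ if $a=\pi_e(x)$ and $=d_h^{\pi_b}(x';M)$ otherwise; for $k=K$, $x\in\mathcal{X}_h$, $x'\in\mathcal{X}_{h+1}$: $\widetilde T((x',1)|(x,K),a)=T(x'|x,a)$. Rewards: $\widetilde r((x,k),a)=0$ if $x\in\mathcal{X}_h$ with $h\le H-1$ and $k<K$; $\widetilde r((x,K),a)=r(x,a)$ for $x\in\mathcal{X}_h$, $h\le H-1$; $\widetilde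 r((x,1),a)=r(x,a)$ for $x\in\mathcal{X}_H$. Policies: $\widetilde\pi_e((x,k))=\pi_e(x)$; $\widetilde\pi_b((x,k))=\pi_b(\cdot|x)$ if $k=K$ and $\widetilde\pi_b((x,k))=\frac12\delta_{\pi_e(x)}+\frac12\delta_{\pi_{\mathrm{other}}(x)}$ otherwise. *)

theory Defs
  imports Complex_Main "HOL-Library.Extended_Real"
begin

text \<open>A layered finite-horizon MDP. Layers are indexed 1..hor; actions form a finite set.
  trans x a x' is the probability T(x'|x,a), rew x a the mean reward, init the initial
  distribution on layer 1.\<close>

record ('s,'a) mdp =
  layer :: "nat \<Rightarrow> 's set"
  acts  :: "'a set"
  trans :: "'s \<Rightarrow> 'a \<Rightarrow> 's \<Rightarrow> real"
  rew   :: "'s \<Rightarrow> 'a \<Rightarrow> real"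
  hor   :: nat
  init  :: "'s \<Rightarrow> real"

type_synonym ('s,'a) policy = "'s \<Rightarrow> 'a \<Rightarrow> real"

definition states :: "('s,'a) mdp \<Rightarrow> 's set" where
  "states M = (\<Union>h\<in>{1..hor M}. layer M h)"

definition wf_mdp :: "('s,'a) mdp \<Rightarrow> bool" where
  "wf_mdp M \<longleftrightarrow> hor M \<ge> 1 \<and> finite (acts M) \<and> acts M \<noteq> {}
    \<and> (\<forall>h\<in>{1..hor M}. finite (layer M h))
    \<and> (\<forall>h\<in>{1..hor M}. \<forall>h'\<in>{1..hor M}. h \<noteq> h' \<longrightarrow> layer M h \<inter> layer M h' = {})
    \<and> (\<forall>x\<in>layer M 1. init M x \<ge> 0) \<and> (\<Sum>x\<in>layer M 1. init M x) = 1
    \<and> (\<forall>h\<in>{1..<hor M}. \<forall>x\<in>layer M h. \<forall>a\<in>acts M.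
          (\<forall>x'\<in>layer M (Suc h). trans M x a x' \<ge> 0)
          \<and> (\<Sum>x'\<in>layer M (Suc h). trans M x a x') = 1)"

definition wf_policy :: "('s,'a) mdp \<Rightarrow> ('s,'a) policy \<Rightarrow> bool" where
  "wf_policy M \<pi> \<longleftrightarrow> (\<forall>x\<in>states M. (\<forall>a\<in>acts M. \<pi> x a \<ge> 0) \<and> (\<Sum>a\<in>acts M. \<pi> x a) = 1)"

definition det_policy :: "('s \<Rightarrow> 'a) \<Rightarrow> ('s,'a) policy" where
  "det_policy f x a = (if a = f x then 1 else 0)"

text \<open>State occupancy: occ0 M pi n x = Pr(x_{n+1} = x).\<close>
primrec occ0 :: "('s,'a) mdp \<Rightarrow> ('s,'a) policy \<Rightarrow> nat \<Rightarrow> 's \<Rightarrow> real" where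
  "occ0 M \<pi> 0 x = init M x"
| "occ0 M \<pi> (Suc n) x' =
     (\<Sum>x\<in>layer M (Suc n). \<Sum>a\<in>acts M. occ0 M \<pi> n x * \<pi> x a * trans M x a x')"

definition occ :: "('s,'a) mdp \<Rightarrow> ('s,'a) policy \<Rightarrow> nat \<Rightarrow> 's \<Rightarrow> real" where
  "occ M \<pi> h x = occ0 M \<pi> (h - 1) x"

definition occ_sa :: "('s,'a) mdp \<Rightarrow> ('s,'a) policy \<Rightarrow> nat \<Rightarrow> 's \<Rightarrow> 'a \<Rightarrow> real" where
  "occ_sa M \<pi> h x a = occ M \<pi> h x * \<pi> x a"

text \<open>Q-function with n steps to go (state in layer hor - n).\<close>
primrec Qrem :: "('s,'a) mdp \<Rightarrow> ('s,'a) policy \<Rightarrow> nat \<Rightarrow> 's \<Rightarrow> 'a \<Rightarrow> real" where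
  "Qrem M \<pi> 0 x a = rew M x a"
| "Qrem M \<pi> (Suc n) x a = rew M x a +
     (\<Sum>x'\<in>layer M (hor M - n). trans M x a x' * (\<Sum>a'\<in>acts M. \<pi> x' a' * Qrem M \<pi> n x' a'))"

definition Q :: "('s,'a) mdp \<Rightarrow> ('s,'a) policy \<Rightarrow> nat \<Rightarrow> 's \<Rightarrow> 'a \<Rightarrow> real" where
  "Q M \<pi> h x a = Qrem M \<pi> (hor M - h) x a"

definition Vval :: "('s,'a) mdp \<Rightarrow> ('s,'a) policy \<Rightarrow> real" where
  "Vval M \<pi> = (\<Sum>x\<in>layer M 1. init M x * (\<Sum>a\<in>acts M. \<pi> x a * Q M \<pi> 1 x a))"

text \<open>Ratio p/q with p/0 = infinity (for p > 0); 0/0 pairs are excluded in conc.\<close>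
definition ratio :: "real \<Rightarrow> real \<Rightarrow> ereal" where
  "ratio p q = (if q = 0 then \<infinity> else ereal (p / q))"

definition conc :: "('s,'a) mdp \<Rightarrow> ('s,'a) policy \<Rightarrow> ('s,'a) policy \<Rightarrow> ereal" where
  "conc M \<pi> \<pi>' = (SUP (h,x,a) \<in> {(h,x,a). h \<in> {1..hor M} \<and> x \<in> layer M h \<and> a \<in> acts M
        \<and> \<not> (occ_sa M \<pi> h x a = 0 \<and> occ_sa M \<pi>' h x a = 0)}.
      ratio (occ_sa M \<pi> h x a) (occ_sa M \<pi>' h x a))"

definition layer_of :: "('s,'a) mdp \<Rightarrow> 's \<Rightarrow> nat" where
  "layer_of M x = (THE h. h \<in> {1..hor M} \<and> x \<in> layer M h)"

definition rep_mdp :: "('s,'a) mdp \<Rightarrow> ('s \<Rightarrow> 'a) \<Rightarrow> ('s,'a) policy \<Rightarrow> nat \<Rightarrow> ('s \<times> nat, 'a) mdp" where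
  "rep_mdp M \<pi>e \<pi>b K = \<lparr>
     layer = (\<lambda>l. if 1 \<le> l \<and> l \<le> (hor M - 1) * K
                  then (\<lambda>x. (x, (l - 1) mod K + 1)) ` layer M ((l - 1) div K + 1)
                  else if l = (hor M - 1) * K + 1 then (\<lambda>x. (x, 1)) ` layer M (hor M)
                  else {}),
     acts = acts M,
     trans = (\<lambda>(x, k) a (x', k').
                if k < K then
                  (if k' = Suc k \<and> x' \<in> layer M (layer_of M x) then
                     (if a = \<pi>e x then (if x' = x then 1 else 0)
                      else occ M \<pi>b (layer_of M x) x')
                   else 0)
                else (if k' = 1 then trans M x a x' else 0)),
     rew = (\<lambda>(x, k) a. if k = K \<or> layer_of M x = hor M then rew M x a else 0),
     hor = (hor M - 1) * K + 1,
     init = (\<lambda>(x, k). if k = 1 then init M x else 0) \<rparr>"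

definition rep_pe :: "('s \<Rightarrow> 'a) \<Rightarrow> ('s \<times> nat \<Rightarrow> 'a)" where
  "rep_pe \<pi>e = (\<lambda>(x, k). \<pi>e x)"

definition rep_pb :: "nat \<Rightarrow> ('s \<Rightarrow> 'a) \<Rightarrow> ('s,'a) policy \<Rightarrow> ('s \<Rightarrow> 'a) \<Rightarrow> ('s \<times> nat, 'a) policy" where
  "rep_pb K \<pi>e \<pi>b \<pi>o = (\<lambda>(x, k) a. if k = K then \<pi>b x a
      else (if a = \<pi>e x then 1/2 else 0) + (if a = \<pi>o x then 1/2 else 0))"

end

theory Submission
  imports Defs
begin

locale rep =
  fixes M :: "('s,'a) mdp" and \<pi>e :: "'s \<Rightarrow> 'a" and \<pi>b :: "('s,'a) policy"
    and \<pi>o :: "'s \<Rightarrow> 'a" and K :: nat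
  assumes wf: "wf_mdp M" 
    and pe_acts: "\<forall>x\<in>states M. \<pi>e x \<in> acts M"
    and wfb: "wf_policy M \<pi>b"
    and po: "\<forall>x\<in>states M. \<pi>o x \<in> acts M \<and> \<pi>o x \<noteq> \<pi>e x"
    and K1: "K \<ge> 1"
begin

abbreviation "H \<equiv> hor M"
abbreviation "Mt \<equiv> rep_mdp M \<pi>e \<pi>b K"
abbreviation "pe \<equiv> det_policy (rep_pe \<pi>e)"
abbreviation "pb \<equiv> rep_pb K \<pi>e \<pi>b \<pi>o"
abbreviation "E \<equiv> det_policy \<pi>e"
definition idx :: "nat \<Rightarrow> nat \<Rightarrow> nat" where "idx h k = (h - 1) * K + k"

lemma H1: "H \<ge> 1" using wf by (simp add: wf_mdp_def)
lemma fin_acts: "finite (acts M)" using wf by (simp add: wf_mdp_def)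
lemma fin_layer: "h \<in> {1..H} \<Longrightarrow> finite (layer M h)" using wf by (simp add: wf_mdp_def)
lemma disj: "h \<in> {1..H} \<Longrightarrow> h' \<in> {1..H} \<Longrightarrow> h \<noteq> h' \<Longrightarrow> layer M h \<inter> layer M h' = {}"
  using wf by (simp add: wf_mdp_def)
lemma init_nn: "x \<in> layer M 1 \<Longrightarrow> init M x \<ge> 0" using wf by (simp add: wf_mdp_def)
lemma init_sum: "(\<Sum>x\<in>layer M 1. init M x) = 1" using wf by (simp add: wf_mdp_def)
lemma trans_nn: "h \<in> {1..<H} \<Longrightarrow> x \<in> layer M h \<Longrightarrow> a \<in> acts M \<Longrightarrow> x' \<in> layer M (Suc h) \<Longrightarrow> trans M x a x' \<ge> 0"
  using wf by (simp add: wf_mdp_def)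
lemma trans_sum: "h \<in> {1..<H} \<Longrightarrow> x \<in> layer M h \<Longrightarrow> a \<in> acts M \<Longrightarrow> (\<Sum>x'\<in>layer M (Suc h). trans M x a x') = 1"
  using wf by (simp add: wf_mdp_def)
lemma in_states: "h \<in> {1..H} \<Longrightarrow> x \<in> layer M h \<Longrightarrow> x \<in> states M"
  by (auto simp: states_def)
lemma pb_nn: "x \<in> states M \<Longrightarrow> a \<in> acts M \<Longrightarrow> \<pi>b x a \<ge> 0" using wfb by (simp add: wf_policy_def)
lemma pb_sum: "x \<in> states M \<Longrightarrow> (\<Sum>a\<in>acts M. \<pi>b x a) = 1" using wfb by (simp add: wf_policy_def)
lemma pb_le1: assumes "x \<in> states M" "a \<in> acts M" shows "\<pi>b x a \<le> 1"
proof -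
  have "\<pi>b x a \<le> (\<Sum>a\<in>acts M. \<pi>b x a)"
    using assms fin_acts by (intro member_le_sum) (auto intro: pb_nn)
  thus ?thesis using pb_sum assms by simp
qed

lemma layer_of_eq: assumes "h \<in> {1..H}" "x \<in> layer M h" shows "layer_of M x = h"
  unfolding layer_of_def
proof (rule the_equality)
  show "h \<in> {1..H} \<and> x \<in> layer M h" using assms by simp
  fix h' assume "h' \<in> {1..H} \<and> x \<in> layer M h'"
  thus "h' = h" using disj[of h h'] assms by blast
qed

lemma sum_img: "(\<Sum>y\<in>(\<lambda>x. (x, k)) ` A. f y) = (\<Sum>x\<in>A. f (x, k))"
  by (simp add: sum.reindex inj_on_def)

lemma sum_det: "a0 \<in> acts M \<Longrightarrow> (\<Sum>a\<in>acts M. (if a = a0 then 1 else 0) * f a) = (f a0 :: real)"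
proof -
  have "(\<Sum>a\<in>acts M. (if a = a0 then 1 else 0) * f a) = (\<Sum>a\<in>acts M. if a0 = a then f a else 0)"
    by (rule sum.cong) auto
  thus "a0 \<in> acts M \<Longrightarrow> ?thesis" using fin_acts by simp
qed

lemma hor_Mt: "hor Mt = idx H 1" by (simp add: rep_mdp_def idx_def)
lemma acts_Mt: "acts Mt = acts M" by (simp add: rep_mdp_def)
lemma init_Mt: "init Mt (x, k) = (if k = 1 then init M x else 0)" by (simp add: rep_mdp_def)
lemma rew_Mt: "rew Mt (x, k) a = (if k = K \<or> layer_of M x = H then rew M x a else 0)"
  by (simp add: rep_mdp_def)
lemma trans_Mt: "trans Mt (x, k) a (x', k') = (if k < K then
                  (if k' = Suc k \<and> x' \<in> layer M (layer_of M x) then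
                     (if a = \<pi>e x then (if x' = x then 1 else 0)
                      else occ M \<pi>b (layer_of M x) x')
                   else 0)
                else (if k' = 1 then trans M x a x' else 0))"
  by (simp add: rep_mdp_def)

lemma idx_le: assumes "h \<in> {1..<H}" "k \<in> {1..K}" shows "idx h k \<le> (H - 1) * K"
proof -
  have "idx h k \<le> (h - 1) * K + K" using assms by (simp add: idx_def)
  also have "\<dots> = h * K" using assms by (cases h) auto
  also have "\<dots> \<le> (H - 1) * K" using assms by (intro mult_le_mono1) auto
  finally show ?thesis .
qed

lemma layer_Mt: assumes "h \<in> {1..<H}" "k \<in> {1..K}"
  shows "layer Mt (idx h k) = (\<lambda>x. (x, k)) ` layer M h"
proof -
  have le: "idx h k \<le> (H - 1) * K" by (rule idx_le[OF assms])
  have e: "idx h k - 1 = (h - 1) * K + (k - 1)" using assms by (simp add: idx_def)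
  have d: "(idx h k - 1) div K = h - 1" "(idx h k - 1) mod K = k - 1"
  proof -
    have kk: "k - 1 < K" using assms by auto
    have "((h - 1) * K + (k - 1)) div K = (k - 1) div K + (h - 1)" using K1
      by (metis add.commute div_mult_self2 not_one_le_zero mult.commute)
    moreover have "((h - 1) * K + (k - 1)) mod K = (k - 1) mod K"
      by (metis add.commute mod_mult_self2 mult.commute)
    ultimately show "(idx h k - 1) div K = h - 1" "(idx h k - 1) mod K = k - 1"
      unfolding e using kk by auto
  qed
  have "1 \<le> idx h k" using assms by (simp add: idx_def)
  thus ?thesis using le d assms by (simp add: rep_mdp_def)
qed

lemma layer_Mt_last: "layer Mt (idx H 1) = (\<lambda>x. (x, 1)) ` layer M H"
  by (simp add: rep_mdp_def idx_def)

lemma occ_nn: assumes nn: "\<forall>x\<in>states M. \<forall>a\<in>acts M. \<pi> x a \<ge> 0"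
  shows "Suc n \<le> H \<Longrightarrow> x \<in> layer M (Suc n) \<Longrightarrow> occ0 M \<pi> n x \<ge> 0"
proof (induction n arbitrary: x)
  case 0 thus ?case by (simp add: init_nn)
next
  case (Suc n)
  have "\<forall>y\<in>layer M (Suc n). \<forall>a\<in>acts M. occ0 M \<pi> n y * \<pi> y a * trans M y a x \<ge> 0"
  proof (intro ballI)
    fix y a assume y: "y \<in> layer M (Suc n)" and a: "a \<in> acts M"
    have "occ0 M \<pi> n y \<ge> 0" using Suc y by simp
    moreover have "\<pi> y a \<ge> 0" using nn y a in_states[of "Suc n" y] Suc.prems by auto
    moreover have "trans M y a x \<ge> 0" using trans_nn[of "Suc n" y a x] Suc.prems y a by auto
    ultimately show "occ0 M \<pi> n y * \<pi> y a * trans M y a x \<ge> 0" by simp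
  qed
  thus ?case by (simp add: sum_nonneg)
qed

lemma occ_sum: assumes s1: "\<forall>x\<in>states M. (\<Sum>a\<in>acts M. \<pi> x a) = 1"
  shows "Suc n \<le> H \<Longrightarrow> (\<Sum>x\<in>layer M (Suc n). occ0 M \<pi> n x) = 1"
proof (induction n)
  case 0
  have "(\<Sum>x\<in>layer M 1. occ0 M \<pi> 0 x) = 1" using init_sum by simp
  thus ?case by (simp only: One_nat_def)
next
  case (Suc n)
  have "(\<Sum>x'\<in>layer M (Suc (Suc n)). occ0 M \<pi> (Suc n) x')
     = (\<Sum>x\<in>layer M (Suc n). \<Sum>a\<in>acts M. \<Sum>x'\<in>layer M (Suc (Suc n)). occ0 M \<pi> n x * \<pi> x a * trans M x a x')"
    apply (simp only: occ0.simps)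
    apply (rule trans[OF sum.swap])
    apply (rule sum.cong[OF refl])
    apply (rule sum.swap)
    done
  also have "\<dots> = (\<Sum>x\<in>layer M (Suc n). \<Sum>a\<in>acts M. occ0 M \<pi> n x * \<pi> x a)"
  proof (rule sum.cong[OF refl], rule sum.cong[OF refl])
    fix x a assume x: "x \<in> layer M (Suc n)" and a: "a \<in> acts M"
    have "(\<Sum>x'\<in>layer M (Suc (Suc n)). occ0 M \<pi> n x * \<pi> x a * trans M x a x')
       = occ0 M \<pi> n x * \<pi> x a * (\<Sum>x'\<in>layer M (Suc (Suc n)). trans M x a x')"
      by (simp add: sum_distrib_left)
    also have "\<dots> = occ0 M \<pi> n x * \<pi> x a" using trans_sum[of "Suc n" x a] Suc.prems x a by simp
    finally show "(\<Sum>x'\<in>layer M (Suc (Suc n)). occ0 M \<pi> n x * \<pi> x a * trans M x a x') = occ0 M \<pi> n x * \<pi> x a" .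
  qed
  also have "\<dots> = (\<Sum>x\<in>layer M (Suc n). occ0 M \<pi> n x)"
  proof (rule sum.cong[OF refl])
    fix x assume x: "x \<in> layer M (Suc n)"
    have "(\<Sum>a\<in>acts M. occ0 M \<pi> n x * \<pi> x a) = occ0 M \<pi> n x * (\<Sum>a\<in>acts M. \<pi> x a)"
      by (simp add: sum_distrib_left)
    thus "(\<Sum>a\<in>acts M. occ0 M \<pi> n x * \<pi> x a) = occ0 M \<pi> n x"
      using s1 in_states[of "Suc n" x] x Suc.prems by simp
  qed
  also have "\<dots> = 1" using Suc by simp
  finally show ?case .
qed

lemma E_sum: "\<forall>x\<in>states M. (\<Sum>a\<in>acts M. E x a) = 1"
  using sum_det[of _ "\<lambda>_. 1"] pe_acts by (simp add: det_policy_def)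
lemma E_nn: "\<forall>x\<in>states M. \<forall>a\<in>acts M. E x a \<ge> 0" by (simp add: det_policy_def)

definition valid :: "nat \<Rightarrow> nat \<Rightarrow> bool" where
  "valid h k \<longleftrightarrow> (h \<in> {1..<H} \<and> k \<in> {1..K}) \<or> (h = H \<and> k = 1)"

lemma layer_Mt_valid: "valid h k \<Longrightarrow> layer Mt (idx h k) = (\<lambda>x. (x, k)) ` layer M h"
  unfolding valid_def using layer_Mt layer_Mt_last by auto

lemma occ_Mt:
  fixes \<pi>t :: "('s \<times> nat, 'a) policy" and \<pi> :: "('s,'a) policy"
  assumes A1: "\<forall>x\<in>states M. \<forall>a. \<pi>t (x, K) a = \<pi> x a"
    and A2: "\<forall>h\<in>{1..<H}. \<forall>k. 1 \<le> k \<and> k < K \<longrightarrow> (\<forall>x\<in>layer M h.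
       (\<Sum>x''\<in>layer M h. \<Sum>a\<in>acts M. occ0 M \<pi> (h - 1) x'' * \<pi>t (x'', k) a * trans Mt (x'', k) a (x, Suc k))
         = occ0 M \<pi> (h - 1) x)"
  shows "\<forall>h k x. valid h k \<longrightarrow> x \<in> layer M h \<longrightarrow> idx h k = Suc m \<longrightarrow> occ0 Mt \<pi>t m (x, k) = occ0 M \<pi> (h - 1) x"
proof (induction m)
  case 0
  show ?case
  proof (intro allI impI)
    fix h k x assume v: "valid h k" and x: "x \<in> layer M h" and i: "idx h k = Suc 0"
    have "k = 1 \<and> h = 1" using v i K1 H1 unfolding valid_def idx_def
      by (auto simp: add_is_1 mult_eq_0_iff)
    thus "occ0 Mt \<pi>t 0 (x, k) = occ0 M \<pi> (h - 1) x" by (simp add: rep_mdp_def)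
  qed
next
  case (Suc m)
  show ?case
  proof (intro allI impI)
    fix h k x assume v: "valid h k" and x: "x \<in> layer M h" and i: "idx h k = Suc (Suc m)"
    have hH: "h \<in> {1..H}" using v H1 unfolding valid_def by auto
    show "occ0 Mt \<pi>t (Suc m) (x, k) = occ0 M \<pi> (h - 1) x"
    proof (cases "k \<ge> 2")
      case True
      hence hk: "h \<in> {1..<H}" "k \<in> {1..K}" using v unfolding valid_def by auto
      have v': "valid h (k - 1)" using hk True unfolding valid_def by auto
      have i': "idx h (k - 1) = Suc m" using i True unfolding idx_def by auto
      have "occ0 Mt \<pi>t (Suc m) (x, k) = (\<Sum>y\<in>layer Mt (idx h (k - 1)). \<Sum>a\<in>acts M. occ0 Mt \<pi>t m y * \<pi>t y a * trans Mt y a (x, k))"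
        using i' by (simp add: acts_Mt)
      also have "\<dots> = (\<Sum>x''\<in>layer M h. \<Sum>a\<in>acts M. occ0 Mt \<pi>t m (x'', k - 1) * \<pi>t (x'', k - 1) a * trans Mt (x'', k - 1) a (x, k))"
        using layer_Mt_valid[OF v'] by (simp add: sum_img)
      also have "\<dots> = (\<Sum>x''\<in>layer M h. \<Sum>a\<in>acts M. occ0 M \<pi> (h - 1) x'' * \<pi>t (x'', k - 1) a * trans Mt (x'', k - 1) a (x, Suc (k - 1)))"
        using Suc.IH v' i' True by (intro sum.cong refl) auto
      also have "\<dots> = occ0 M \<pi> (h - 1) x"
      proof (rule A2[rule_format])
        show "h \<in> {1..<H}" "x \<in> layer M h" by (fact hk(1)) (fact x)
        show "1 \<le> k - 1 \<and> k - 1 < K" using True hk by auto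
      qed
      finally show ?thesis .
    next
      case False
      hence k1: "k = 1" using v unfolding valid_def by auto
      have h2: "h \<ge> 2" using i k1 unfolding idx_def by (cases "h - 1") auto
      have v': "valid (h - 1) K" using hH h2 K1 unfolding valid_def by auto
      have hm: "h - 1 = Suc (h - 2)" using h2 by auto
      have i1: "(h - 1) * K = Suc m" using i k1 by (simp add: idx_def)
      have "idx (h - 1) K = (h - 2) * K + K" unfolding idx_def by (simp add: numeral_2_eq_2)
      also have "\<dots> = (h - 1) * K" by (subst hm) simp
      finally have i': "idx (h - 1) K = Suc m" using i1 by simp
      have "occ0 Mt \<pi>t (Suc m) (x, k) = (\<Sum>y\<in>layer Mt (idx (h - 1) K). \<Sum>a\<in>acts M. occ0 Mt \<pi>t m y * \<pi>t y a * trans Mt y a (x, k))"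
        using i' by (simp add: acts_Mt)
      also have "\<dots> = (\<Sum>x''\<in>layer M (h - 1). \<Sum>a\<in>acts M. occ0 Mt \<pi>t m (x'', K) * \<pi>t (x'', K) a * trans Mt (x'', K) a (x, 1))"
        using layer_Mt_valid[OF v'] k1 by (simp add: sum_img)
      also have "\<dots> = (\<Sum>x''\<in>layer M (h - 1). \<Sum>a\<in>acts M. occ0 M \<pi> (h - 2) x'' * \<pi> x'' a * trans M x'' a x)"
      proof (intro sum.cong refl)
        fix x'' a assume x'': "x'' \<in> layer M (h - 1)"
        have "x'' \<in> states M" using x'' hH h2 by (intro in_states[of "h - 1"]) auto
        thus "occ0 Mt \<pi>t m (x'', K) * \<pi>t (x'', K) a * trans Mt (x'', K) a (x, 1) = occ0 M \<pi> (h - 2) x'' * \<pi> x'' a * trans M x'' a x"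
          using Suc.IH v' i' x'' A1 by (simp add: trans_Mt numeral_2_eq_2)
      qed
      also have "\<dots> = occ0 M \<pi> (h - 1) x" by (simp only: hm occ0.simps)
      finally show ?thesis .
    qed
  qed
qed

lemma occ_pe: assumes "valid h k" "x \<in> layer M h"
  shows "occ Mt pe (idx h k) (x, k) = occ M E h x"
proof -
  have A1: "\<forall>x\<in>states M. \<forall>a. pe (x, K) a = E x a" by (simp add: det_policy_def rep_pe_def)
  have A2: "\<forall>h\<in>{1..<H}. \<forall>k. 1 \<le> k \<and> k < K \<longrightarrow> (\<forall>x\<in>layer M h.
       (\<Sum>x''\<in>layer M h. \<Sum>a\<in>acts M. occ0 M E (h - 1) x'' * pe (x'', k) a * trans Mt (x'', k) a (x, Suc k))
         = occ0 M E (h - 1) x)"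
  proof (intro ballI allI impI)
    fix h k x assume h: "h \<in> {1..<H}" and k: "1 \<le> k \<and> k < K" and x: "x \<in> layer M h"
    have hH: "h \<in> {1..H}" using h by auto
    have "(\<Sum>x''\<in>layer M h. \<Sum>a\<in>acts M. occ0 M E (h - 1) x'' * pe (x'', k) a * trans Mt (x'', k) a (x, Suc k))
       = (\<Sum>x''\<in>layer M h. if x = x'' then occ0 M E (h - 1) x'' else 0)"
    proof (rule sum.cong[OF refl])
      fix x'' assume x'': "x'' \<in> layer M h"
      have e: "\<pi>e x'' \<in> acts M" using pe_acts in_states[OF hH x''] by auto
      have "(\<Sum>a\<in>acts M. occ0 M E (h - 1) x'' * pe (x'', k) a * trans Mt (x'', k) a (x, Suc k))
         = (\<Sum>a\<in>acts M. if \<pi>e x'' = a then (if x = x'' then occ0 M E (h - 1) x'' else 0) else 0)"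
        using k x layer_of_eq[OF hH x''] by (intro sum.cong refl) (auto simp: trans_Mt det_policy_def rep_pe_def)
      also have "\<dots> = (if x = x'' then occ0 M E (h - 1) x'' else 0)" using e fin_acts by simp
      finally show "(\<Sum>a\<in>acts M. occ0 M E (h - 1) x'' * pe (x'', k) a * trans Mt (x'', k) a (x, Suc k))
         = (if x = x'' then occ0 M E (h - 1) x'' else 0)" .
    qed
    also have "\<dots> = occ0 M E (h - 1) x" using x fin_layer[OF hH] by simp
    finally show "(\<Sum>x''\<in>layer M h. \<Sum>a\<in>acts M. occ0 M E (h - 1) x'' * pe (x'', k) a * trans Mt (x'', k) a (x, Suc k))
         = occ0 M E (h - 1) x" .
  qed
  have "1 \<le> idx h k" using assms(1) H1 unfolding valid_def idx_def by auto
  then obtain m where m: "idx h k = Suc m" by (cases "idx h k") auto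
  show ?thesis using occ_Mt[OF A1 A2, of m] assms m by (simp add: occ_def)
qed

lemma occ_pb: assumes "valid h k" "x \<in> layer M h"
  shows "occ Mt pb (idx h k) (x, k) = occ M \<pi>b h x"
proof -
  have A1: "\<forall>x\<in>states M. \<forall>a. pb (x, K) a = \<pi>b x a" by (simp add: rep_pb_def)
  have A2: "\<forall>h\<in>{1..<H}. \<forall>k. 1 \<le> k \<and> k < K \<longrightarrow> (\<forall>x\<in>layer M h.
       (\<Sum>x''\<in>layer M h. \<Sum>a\<in>acts M. occ0 M \<pi>b (h - 1) x'' * pb (x'', k) a * trans Mt (x'', k) a (x, Suc k))
         = occ0 M \<pi>b (h - 1) x)"
  proof (intro ballI allI impI)
    fix h k x assume h: "h \<in> {1..<H}" and k: "1 \<le> k \<and> k < K" and x: "x \<in> layer M h"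
    have hH: "h \<in> {1..H}" using h by auto
    define c where "c = occ0 M \<pi>b (h - 1)"
    define D where "D = occ M \<pi>b h x"
    have D: "D = c x" by (simp add: D_def c_def occ_def)
    have "(\<Sum>x''\<in>layer M h. \<Sum>a\<in>acts M. occ0 M \<pi>b (h - 1) x'' * pb (x'', k) a * trans Mt (x'', k) a (x, Suc k))
       = (\<Sum>x''\<in>layer M h. (if x = x'' then c x'' / 2 else 0) + c x'' / 2 * D)"
    proof (rule sum.cong[OF refl])
      fix x'' assume x'': "x'' \<in> layer M h"
      have e: "\<pi>e x'' \<in> acts M" using pe_acts in_states[OF hH x''] by auto
      have o: "\<pi>o x'' \<in> acts M" "\<pi>o x'' \<noteq> \<pi>e x''" using po in_states[OF hH x''] by auto
      have "(\<Sum>a\<in>acts M. occ0 M \<pi>b (h - 1) x'' * pb (x'', k) a * trans Mt (x'', k) a (x, Suc k))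
         = (\<Sum>a\<in>acts M. (if \<pi>e x'' = a then (if x = x'' then c x'' / 2 else 0) else 0)
              + (if \<pi>o x'' = a then c x'' / 2 * D else 0))"
        using k x o layer_of_eq[OF hH x''] by (intro sum.cong refl) (auto simp: trans_Mt rep_pb_def c_def D_def)
      also have "\<dots> = (if x = x'' then c x'' / 2 else 0) + c x'' / 2 * D"
        using e o fin_acts by (simp add: sum.distrib)
      finally show "(\<Sum>a\<in>acts M. occ0 M \<pi>b (h - 1) x'' * pb (x'', k) a * trans Mt (x'', k) a (x, Suc k))
         = (if x = x'' then c x'' / 2 else 0) + c x'' / 2 * D" .
    qed
    also have "\<dots> = c x / 2 + (\<Sum>x''\<in>layer M h. c x'') / 2 * D"
      using x fin_layer[OF hH] by (simp add: sum.distrib sum_divide_distrib[symmetric] sum_distrib_right)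
    also have "(\<Sum>x''\<in>layer M h. c x'') = 1"
      using occ_sum[of \<pi>b "h - 1"] pb_sum h unfolding c_def by auto
    finally show "(\<Sum>x''\<in>layer M h. \<Sum>a\<in>acts M. occ0 M \<pi>b (h - 1) x'' * pb (x'', k) a * trans Mt (x'', k) a (x, Suc k))
         = occ0 M \<pi>b (h - 1) x" using D unfolding c_def by simp
  qed
  have "1 \<le> idx h k" using assms(1) H1 unfolding valid_def idx_def by auto
  then obtain m where m: "idx h k = Suc m" by (cases "idx h k") auto
  show ?thesis using occ_Mt[OF A1 A2, of m] assms m by (simp add: occ_def)
qed

lemma idx_succK: "h \<ge> 1 \<Longrightarrow> idx h K + 1 = idx (Suc h) 1"
  unfolding idx_def by (cases h) (auto simp: algebra_simps)

lemma sum_pe: "x \<in> states M \<Longrightarrow> (\<Sum>a'\<in>acts M. pe (x, j) a' * f a') = f (\<pi>e x)"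
  using pe_acts sum_det[of "\<pi>e x" f] by (simp add: det_policy_def rep_pe_def)
lemma sum_E: "x \<in> states M \<Longrightarrow> (\<Sum>a'\<in>acts M. E x a' * f a') = f (\<pi>e x)"
  using pe_acts sum_det[of "\<pi>e x" f] by (simp add: det_policy_def)

definition RHS where "RHS h k x a = (if k = K then Q M E h x a
             else if a = \<pi>e x then Q M E h x (\<pi>e x)
             else (\<Sum>x'\<in>layer M h. occ M \<pi>b h x' * Q M E h x' (\<pi>e x')))"

lemma Qlast: "x \<in> layer M H \<Longrightarrow> Qrem Mt pe 0 (x, 1) a = Qrem M E 0 x a"
  using layer_of_eq[of H x] H1 by (simp add: rew_Mt)

lemma Q_main: "\<forall>h k x a. h \<in> {1..<H} \<longrightarrow> k \<in> {1..K} \<longrightarrow> x \<in> layer M h \<longrightarrow> a \<in> acts M \<longrightarrow>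
   hor Mt - idx h k = Suc n \<longrightarrow> Qrem Mt pe (Suc n) (x, k) a = RHS h k x a"
proof (induction n)
  case (0)
  show ?case
  proof (intro allI impI)
    fix h k x a assume h: "h \<in> {1..<H}" and k: "k \<in> {1..K}" and x: "x \<in> layer M h" and a: "a \<in> acts M"
      and hn: "hor Mt - idx h k = Suc 0"
    have hH: "h \<in> {1..H}" using h by auto
    have le: "idx h k \<le> (H - 1) * K" using idx_le[OF h k] .
    have nx: "hor Mt - 0 = idx h k + 1" using hn by simp
    have kK: "k = K"
    proof (rule ccontr)
      assume "k \<noteq> K"
      hence "idx h k + 1 \<le> (H - 1) * K" using idx_le[of h "Suc k"] h k by (simp add: idx_def)
      thus False using nx hor_Mt by (simp add: idx_def)
    qed
    have hs: "Suc h = H"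
    proof (rule ccontr)
      assume "Suc h \<noteq> H"
      hence "idx (Suc h) 1 \<le> (H - 1) * K" using idx_le[of "Suc h" 1] h K1 by auto
      thus False using nx hor_Mt kK idx_succK[of h] h by (simp add: idx_def)
    qed
    have lay: "layer Mt (hor Mt - 0) = (\<lambda>x. (x, 1)) ` layer M (Suc h)"
      using nx kK idx_succK[of h] h hs layer_Mt_last by auto
    have HH: "H - h = Suc 0" using hs by auto
    have "Qrem Mt pe (Suc 0) (x, k) a = rew M x a +
        (\<Sum>x''\<in>layer M (Suc h). trans M x a x'' * Qrem M E 0 x'' (\<pi>e x''))"
    proof -
      have "\<forall>x''\<in>layer M (Suc h). (\<Sum>a'\<in>acts M. pe (x'', 1) a' * Qrem Mt pe 0 (x'', 1) a') = Qrem M E 0 x'' (\<pi>e x'')"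
        using sum_pe in_states[of H] Qlast hs H1 by auto
      thus ?thesis using lay kK by (simp add: sum_img acts_Mt rew_Mt trans_Mt del: Qrem.simps(1))
    qed
    also have "\<dots> = RHS h k x a"
      unfolding RHS_def Q_def using kK HH hs in_states[of "Suc h"] H1
      by (simp add: sum_E del: Qrem.simps(1))
    finally show "Qrem Mt pe (Suc 0) (x, k) a = RHS h k x a" .
  qed
next
  case (Suc n)
  show ?case
  proof (intro allI impI)
    fix h k x a assume h: "h \<in> {1..<H}" and k: "k \<in> {1..K}" and x: "x \<in> layer M h" and a: "a \<in> acts M"
      and hn: "hor Mt - idx h k = Suc (Suc n)"
    have hH: "h \<in> {1..H}" using h by auto
    have nx: "hor Mt - Suc n = idx h k + 1" using hn by simp
    show "Qrem Mt pe (Suc (Suc n)) (x, k) a = RHS h k x a"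
    proof (cases "k = K")
      case False
      have k': "Suc k \<in> {1..K}" using k False by auto
      have nx': "hor Mt - idx h (Suc k) = Suc n" using hn by (simp add: idx_def)
      have lay: "layer Mt (hor Mt - Suc n) = (\<lambda>x. (x, Suc k)) ` layer M h"
        using nx layer_Mt[OF h k'] by (simp add: idx_def)
      have V: "\<forall>x''\<in>layer M h. (\<Sum>a'\<in>acts M. pe (x'', Suc k) a' * Qrem Mt pe (Suc n) (x'', Suc k) a') = Q M E h x'' (\<pi>e x'')"
      proof
        fix x'' assume x'': "x'' \<in> layer M h"
        have e: "\<pi>e x'' \<in> acts M" using pe_acts in_states[OF hH x''] by auto
        have "(\<Sum>a'\<in>acts M. pe (x'', Suc k) a' * Qrem Mt pe (Suc n) (x'', Suc k) a') = Qrem Mt pe (Suc n) (x'', Suc k) (\<pi>e x'')"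
          using sum_pe in_states[OF hH x''] by simp
        also have "\<dots> = RHS h (Suc k) x'' (\<pi>e x'')" using Suc.IH h k' x'' e nx' by blast
        also have "\<dots> = Q M E h x'' (\<pi>e x'')" by (simp add: RHS_def)
        finally show "(\<Sum>a'\<in>acts M. pe (x'', Suc k) a' * Qrem Mt pe (Suc n) (x'', Suc k) a') = Q M E h x'' (\<pi>e x'')" .
      qed
      have lo: "layer_of M x = h" using layer_of_eq[OF hH x] .
      have hne: "h \<noteq> H" using h by auto
      have "Qrem Mt pe (Suc (Suc n)) (x, k) a =
         (\<Sum>x''\<in>layer M h. trans Mt (x, k) a (x'', Suc k) * Q M E h x'' (\<pi>e x''))"
        using lay V False lo hne by (simp add: Qrem.simps(2)[of _ _ "Suc n"] sum_img acts_Mt rew_Mt del: Qrem.simps)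
      also have "\<dots> = RHS h k x a"
      proof (cases "a = \<pi>e x")
        case True
        have "(\<Sum>x''\<in>layer M h. trans Mt (x, k) a (x'', Suc k) * Q M E h x'' (\<pi>e x''))
            = (\<Sum>x''\<in>layer M h. if x = x'' then Q M E h x'' (\<pi>e x'') else 0)"
          using True False k lo by (intro sum.cong refl) (auto simp: trans_Mt)
        also have "\<dots> = Q M E h x (\<pi>e x)" using x fin_layer[OF hH] by simp
        finally show ?thesis using True False by (simp add: RHS_def)
      next
        case nT: False
        have "(\<Sum>x''\<in>layer M h. trans Mt (x, k) a (x'', Suc k) * Q M E h x'' (\<pi>e x''))
            = (\<Sum>x''\<in>layer M h. occ M \<pi>b h x'' * Q M E h x'' (\<pi>e x''))"
          using nT False k lo by (intro sum.cong refl) (auto simp: trans_Mt)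
        thus ?thesis using nT False by (simp add: RHS_def)
      qed
      finally show ?thesis .
    next
      case True
      have hs1: "Suc h \<in> {1..<H}"
      proof (rule ccontr)
        assume "Suc h \<notin> {1..<H}"
        hence "Suc h = H" using h by auto
        hence "idx h k + 1 = hor Mt" using True idx_succK[of h] h hor_Mt by auto
        thus False using nx by simp
      qed
      have one: "(1::nat) \<in> {1..K}" using K1 by auto
      have nx': "hor Mt - idx (Suc h) 1 = Suc n" using hn True idx_succK[of h] h by simp
      have lay: "layer Mt (hor Mt - Suc n) = (\<lambda>x. (x, 1)) ` layer M (Suc h)"
        using nx layer_Mt[OF hs1 one] True idx_succK[of h] h by simp
      have hsH: "Suc h \<in> {1..H}" using hs1 by auto
      have V: "\<forall>x''\<in>layer M (Suc h). (\<Sum>a'\<in>acts M. pe (x'', 1) a' * Qrem Mt pe (Suc n) (x'', 1) a') = Q M E (Suc h) x'' (\<pi>e x'')"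
      proof
        fix x'' assume x'': "x'' \<in> layer M (Suc h)"
        have e: "\<pi>e x'' \<in> acts M" using pe_acts in_states[OF hsH x''] by auto
        have "(\<Sum>a'\<in>acts M. pe (x'', 1) a' * Qrem Mt pe (Suc n) (x'', 1) a') = Qrem Mt pe (Suc n) (x'', 1) (\<pi>e x'')"
          using sum_pe in_states[OF hsH x''] by simp
        also have "\<dots> = RHS (Suc h) 1 x'' (\<pi>e x'')" using Suc.IH hs1 one x'' e nx' by blast
        also have "\<dots> = Q M E (Suc h) x'' (\<pi>e x'')" by (simp add: RHS_def)
        finally show "(\<Sum>a'\<in>acts M. pe (x'', 1) a' * Qrem Mt pe (Suc n) (x'', 1) a') = Q M E (Suc h) x'' (\<pi>e x'')" .
      qed
      have "Qrem Mt pe (Suc (Suc n)) (x, k) a =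
         rew M x a + (\<Sum>x''\<in>layer M (Suc h). trans M x a x'' * Q M E (Suc h) x'' (\<pi>e x''))"
        using lay V True by (simp add: Qrem.simps(2)[of _ _ "Suc n"] sum_img acts_Mt rew_Mt trans_Mt del: Qrem.simps)
      also have "\<dots> = RHS h k x a"
      proof -
        have HH: "H - h = Suc (H - Suc h)" "H - (H - Suc h) = Suc h" using hs1 by auto
        have "Q M E h x a = rew M x a + (\<Sum>x''\<in>layer M (Suc h). trans M x a x'' * Q M E (Suc h) x'' (\<pi>e x''))"
          unfolding Q_def HH(1) Qrem.simps HH(2)
          using in_states[OF hsH] by (simp add: sum_E)
        thus ?thesis using True by (simp add: RHS_def)
      qed
      finally show ?thesis .
    qed
  qed
qed

lemma conc_ge: assumes "h \<in> {1..H}" "x \<in> layer M h" "a \<in> acts M"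
   "\<not> (occ_sa M E h x a = 0 \<and> occ_sa M \<pi>b h x a = 0)"
  shows "ratio (occ_sa M E h x a) (occ_sa M \<pi>b h x a) \<le> conc M E \<pi>b"
proof -
  let ?f = "\<lambda>(h,x,a). ratio (occ_sa M E h x a) (occ_sa M \<pi>b h x a)"
  let ?S = "{(h,x,a). h \<in> {1..hor M} \<and> x \<in> layer M h \<and> a \<in> acts M
        \<and> \<not> (occ_sa M E h x a = 0 \<and> occ_sa M \<pi>b h x a = 0)}"
  have "(h,x,a) \<in> ?S" using assms by auto
  hence "?f (h,x,a) \<le> Sup (?f ` ?S)" by (rule SUP_upper)
  thus ?thesis by (simp add: conc_def)
qed

lemma ratio_nn: "q \<ge> 0 \<Longrightarrow> p \<ge> 0 \<Longrightarrow> ratio p q \<ge> 0"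
  by (simp add: ratio_def)

lemma conc_nn: "conc M E \<pi>b \<ge> 0"
proof -
  obtain x where x: "x \<in> layer M 1" "init M x > 0"
  proof (rule ccontr)
    assume "\<not> thesis"
    hence "\<forall>x\<in>layer M 1. init M x \<le> 0" using that by force
    hence "(\<Sum>x\<in>layer M 1. init M x) \<le> 0" by (simp add: sum_nonpos)
    thus False using init_sum by simp
  qed
  have hH: "(1::nat) \<in> {1..H}" using H1 by auto
  have e: "\<pi>e x \<in> acts M" using pe_acts in_states[OF hH x(1)] by auto
  have u: "occ_sa M E 1 x (\<pi>e x) = init M x" by (simp add: occ_sa_def occ_def det_policy_def)
  have v: "occ_sa M \<pi>b 1 x (\<pi>e x) \<ge> 0"
    using pb_nn[OF in_states[OF hH x(1)] e] x by (simp add: occ_sa_def occ_def)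
  have "0 \<le> ratio (occ_sa M E 1 x (\<pi>e x)) (occ_sa M \<pi>b 1 x (\<pi>e x))"
    using u v x by (intro ratio_nn) auto
  also have "\<dots> \<le> conc M E \<pi>b" using conc_ge[OF hH x(1) e] u x by auto
  finally show ?thesis .
qed

lemma decomp: assumes "l \<in> {1..hor Mt}" "y \<in> layer Mt l"
  shows "\<exists>h k x. valid h k \<and> l = idx h k \<and> y = (x, k) \<and> x \<in> layer M h"
proof (cases "l \<le> (H - 1) * K")
  case True
  define h where "h = (l - 1) div K + 1"
  define k where "k = (l - 1) mod K + 1"
  have Kp: "K > 0" using K1 by auto
  have "l - 1 < (H - 1) * K" using True assms(1) by auto
  hence "(l - 1) div K < H - 1"
    using Kp by (simp add: div_less_iff_less_mult)
  hence hv: "h \<in> {1..<H}" unfolding h_def by auto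
  have kv: "k \<in> {1..K}" unfolding k_def using Kp by (simp add: Suc_leI)
  have li: "l = idx h k" unfolding idx_def h_def k_def using assms(1)
    by (simp add: div_mult_mod_eq[of "l - 1" K, symmetric] algebra_simps) 
  have "y \<in> (\<lambda>x. (x, k)) ` layer M h" using assms(2) True assms(1)
    by (simp add: rep_mdp_def h_def k_def)
  thus ?thesis using hv kv li unfolding valid_def by blast
next
  case False
  hence "l = idx H 1" using assms(1) by (simp add: rep_mdp_def idx_def)
  moreover have "valid H 1" by (simp add: valid_def)
  ultimately show ?thesis using assms(2) layer_Mt_last by auto
qed

lemma two_bound: "ereal t \<le> c \<Longrightarrow> ereal (2 * t) \<le> 2 * c"
  by (cases c) auto
lemma c_le_2c: "0 \<le> (c::ereal) \<Longrightarrow> c \<le> 2 * c"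
  by (cases c) auto

lemma part_a: "conc Mt pe pb \<le> 2 * conc M E \<pi>b"
  unfolding conc_def[of Mt]
proof (rule SUP_least, clarify)
  let ?c = "conc M E \<pi>b"
  have c0: "0 \<le> ?c" by (rule conc_nn)
  have c2: "?c \<le> 2 * ?c" using c_le_2c[OF c0] .
  have z2: "0 \<le> 2 * ?c" using c0 c2 by (rule order.trans)
  fix l y k' a
  assume l: "l \<in> {1..hor Mt}" and y: "(y, k') \<in> layer Mt l" and a: "a \<in> acts Mt"
    and nz: "\<not> (occ_sa Mt pe l (y, k') a = 0 \<and> occ_sa Mt pb l (y, k') a = 0)"
  obtain h k x where v: "valid h k" and li: "l = idx h k" and yx: "(y, k') = (x, k)" and x: "x \<in> layer M h"
    using decomp[OF l y] by blast
  have yy: "y = x" "k' = k" using yx by auto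
  have a': "a \<in> acts M" using a by (simp add: acts_Mt)
  have hH: "h \<in> {1..H}" using v H1 unfolding valid_def by auto
  have xs: "x \<in> states M" using in_states[OF hH x] .
  define u where "u = occ M E h x"
  define w where "w = occ M \<pi>b h x"
  have u0: "u \<ge> 0" unfolding u_def occ_def using occ_nn[OF E_nn, of "h - 1" x] hH x by auto
  have w0: "w \<ge> 0" unfolding w_def occ_def using occ_nn[of \<pi>b "h - 1" x] pb_nn hH x by auto
  have P: "occ_sa Mt pe l (y, k') a = u * (if a = \<pi>e x then 1 else 0)"
    using occ_pe[OF v x] unfolding occ_sa_def li yy u_def by (simp add: det_policy_def rep_pe_def)
  have Q: "occ_sa Mt pb l (y, k') a = w * pb (x, k) a"
    using occ_pb[OF v x] unfolding occ_sa_def li yy w_def by simp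
  have PM: "occ_sa M E h x (\<pi>e x) = u" by (simp add: occ_sa_def u_def det_policy_def)
  have QM: "occ_sa M \<pi>b h x (\<pi>e x) = w * \<pi>b x (\<pi>e x)" by (simp add: occ_sa_def w_def)
  have e: "\<pi>e x \<in> acts M" using pe_acts xs by auto
  show "ratio (occ_sa Mt pe l (y, k') a) (occ_sa Mt pb l (y, k') a) \<le> 2 * ?c"
  proof (cases "a = \<pi>e x")
    case False
    hence "occ_sa Mt pb l (y, k') a \<noteq> 0" using nz P by auto
    hence "ratio (occ_sa Mt pe l (y, k') a) (occ_sa Mt pb l (y, k') a) = 0"
      using P False by (simp add: ratio_def zero_ereal_def)
    thus ?thesis using z2 by simp
  next
    case True
    show ?thesis
    proof (cases "k = K")
      case True2: True
      have "ratio (occ_sa Mt pe l (y, k') a) (occ_sa Mt pb l (y, k') a) = ratio (occ_sa M E h x (\<pi>e x)) (occ_sa M \<pi>b h x (\<pi>e x))"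
        using P Q PM QM True True2 by (simp add: rep_pb_def)
      also have "\<dots> \<le> ?c" using conc_ge[OF hH x e] nz P Q PM QM True True2 by (simp add: rep_pb_def)
      finally show ?thesis using c2 by simp
    next
      case False2: False
      have pbh: "pb (x, k) a = 1/2" using True False2 po xs by (auto simp: rep_pb_def)
      show ?thesis
      proof (cases "u = 0")
        case True3: True
        hence "w \<noteq> 0" using nz P Q pbh by auto
        hence "ratio (occ_sa Mt pe l (y, k') a) (occ_sa Mt pb l (y, k') a) = 0"
          using P Q pbh True3 by (simp add: ratio_def zero_ereal_def)
        thus ?thesis using z2 by simp
      next
        case False3: False
        have inS: "ratio u (w * \<pi>b x (\<pi>e x)) \<le> ?c" using conc_ge[OF hH x e] PM QM False3 by simp
        show ?thesis
        proof (cases "w * \<pi>b x (\<pi>e x) = 0")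
          case True4: True
          hence "?c = \<infinity>" using inS by (simp add: ratio_def)
          thus ?thesis by simp
        next
          case False4: False
          have wp: "w > 0" using w0 False4 by (cases "w = 0") auto
          have bp: "\<pi>b x (\<pi>e x) > 0" using pb_nn[OF xs e] False4 by (cases "\<pi>b x (\<pi>e x) = 0") auto
          have b1: "\<pi>b x (\<pi>e x) \<le> 1" using pb_le1[OF xs e] .
          have lhs: "ratio (occ_sa Mt pe l (y, k') a) (occ_sa Mt pb l (y, k') a) = ereal (u / (w / 2))"
          proof -
            have q: "occ_sa Mt pb l (y, k') a = w / 2" using Q pbh by simp
            have p: "occ_sa Mt pe l (y, k') a = u" using P True by simp
            show ?thesis using wp by (simp only: ratio_def q p) simp
          qed
          have "u / (w / 2) \<le> 2 * (u / (w * \<pi>b x (\<pi>e x)))"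
          proof -
            have "u / (w / 2) = 2 * (u / w)" by simp
            also have "u / w \<le> u / (w * \<pi>b x (\<pi>e x))"
              using u0 wp bp b1 by (intro divide_left_mono) (auto simp: mult_le_cancel_left1)
            hence "2 * (u / w) \<le> 2 * (u / (w * \<pi>b x (\<pi>e x)))" by simp
            finally show ?thesis .
          qed
          moreover have "ereal (2 * (u / (w * \<pi>b x (\<pi>e x)))) \<le> 2 * ?c"
            using inS False4 by (intro two_bound) (simp add: ratio_def)
          ultimately show ?thesis using lhs by (metis ereal_less_eq(3) order.trans)
        qed
      qed
    qed
  qed
qed

lemma part_b: assumes "h \<in> {1..<H}" "x \<in> layer M h" "k \<in> {1..K}" "a \<in> acts M"
  shows "Q Mt pe ((h - 1) * K + k) (x, k) a = RHS h k x a"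
proof -
  have "idx h k < hor Mt" using idx_le[OF assms(1,3)] hor_Mt by (simp add: idx_def)
  then obtain n where n: "hor Mt - idx h k = Suc n" by (metis Suc_diff_Suc zero_less_diff less_imp_Suc_add diff_Suc_1 add_diff_cancel_left' Suc_pred)
  thus ?thesis using Q_main[of n] assms unfolding Q_def by (simp add: idx_def)
qed

lemma part_c: "x \<in> layer M H \<Longrightarrow> Q Mt pe (hor Mt) (x, 1) a = Q M E H x a"
  using Qlast unfolding Q_def by simp

lemma part_d: "Vval Mt pe = Vval M E"
proof -
  have hH: "(1::nat) \<in> {1..H}" using H1 by auto
  have lay: "layer Mt 1 = (\<lambda>x. (x, 1)) ` layer M 1"
  proof (cases "H = 1")
    case True thus ?thesis using layer_Mt_last by (simp add: idx_def)
  next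
    case False
    hence "(1::nat) \<in> {1..<H}" using H1 by auto
    thus ?thesis using layer_Mt[of 1 1] K1 by (simp add: idx_def)
  qed
  have QQ: "\<forall>x\<in>layer M 1. Q Mt pe 1 (x, 1) (\<pi>e x) = Q M E 1 x (\<pi>e x)"
  proof
    fix x assume x: "x \<in> layer M 1"
    have e: "\<pi>e x \<in> acts M" using pe_acts in_states[OF hH x] by auto
    show "Q Mt pe 1 (x, 1) (\<pi>e x) = Q M E 1 x (\<pi>e x)"
    proof (cases "H = 1")
      case True
      have "hor Mt = 1" using True by (simp add: rep_mdp_def)
      thus ?thesis using part_c[of x "\<pi>e x"] x True by simp
    next
      case False
      hence "(1::nat) \<in> {1..<H}" using H1 by auto
      thus ?thesis using part_b[of 1 x 1 "\<pi>e x"] x e K1 by (simp add: RHS_def)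
    qed
  qed
  have "Vval Mt pe = (\<Sum>x\<in>layer M 1. init M x * Q Mt pe 1 (x, 1) (\<pi>e x))"
    unfolding Vval_def lay sum_img using sum_pe in_states[OF hH]
    by (simp add: init_Mt acts_Mt)
  also have "\<dots> = (\<Sum>x\<in>layer M 1. init M x * Q M E 1 x (\<pi>e x))" using QQ by simp
  also have "\<dots> = Vval M E"
    unfolding Vval_def using sum_E in_states[OF hH] by simp
  finally show ?thesis .
qed

end

theorem mainTheorem13:
  fixes M :: "('s,'a) mdp" and \<pi>e :: "'s \<Rightarrow> 'a" and \<pi>b :: "('s,'a) policy"
    and \<pi>o :: "'s \<Rightarrow> 'a" and K :: nat
  assumes "wf_mdp M" and "card (acts M) \<ge> 2"
    and "\<forall>x\<in>states M. \<pi>e x \<in> acts M"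
    and "wf_policy M \<pi>b"
    and "\<forall>x\<in>states M. \<pi>o x \<in> acts M \<and> \<pi>o x \<noteq> \<pi>e x"
    and "K \<ge> 1"
  defines "Mt \<equiv> rep_mdp M \<pi>e \<pi>b K"
    and "pe \<equiv> det_policy (rep_pe \<pi>e)"
    and "pb \<equiv> rep_pb K \<pi>e \<pi>b \<pi>o"
  shows "conc Mt pe pb \<le> 2 * conc M (det_policy \<pi>e) \<pi>b
    \<and> (\<forall>h\<in>{1..<hor M}. \<forall>x\<in>layer M h. \<forall>k\<in>{1..K}. \<forall>a\<in>acts M.
          Q Mt pe ((h - 1) * K + k) (x, k) a =
            (if k = K then Q M (det_policy \<pi>e) h x a
             else if a = \<pi>e x then Q M (det_policy \<pi>e) h x (\<pi>e x)
             else (\<Sum>x'\<in>layer M h. occ M \<pi>b h x' * Q M (det_policy \<pi>e) h x' (\<pi>e x'))))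
    \<and> (\<forall>x\<in>layer M (hor M). \<forall>a\<in>acts M.
          Q Mt pe (hor Mt) (x, 1) a = Q M (det_policy \<pi>e) (hor M) x a)
    \<and> Vval Mt pe = Vval M (det_policy \<pi>e)"
proof -
  interpret rep M \<pi>e \<pi>b \<pi>o K using assms by unfold_locales auto
  show ?thesis unfolding Mt_def pe_def pb_def
    using part_a part_b part_c part_d unfolding RHS_def by auto
qed

end
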